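(* Let $q$ be a power of an odd prime with $q\equiv1\pmod4$, let $k$ be a divisor of $q-1$ such that $e=(q-1)/k$ is even. If $(q,k)$ gives a $3$-design, then $k\equiv 1,2,5,10,13$ or $17\pmod{24}$.
   Context: The group $\mathrm{PSL}(2,q)$ acts on $\mathrm{PG}(1,q)=\mathbb{F}_q\cup\{\infty\}$ by linear fractional transformations $z\mapsto (az+b)/(cz+d)$ with $ad-bc$ a nonzero square in $\mathbb{F}_q$. A $k$-subset $B$ of $\mathrm{PG}(1,q)$ is a starter of a $3$-design if its $\mathrm{PSL}(2,q)$-orbit is the block set of a $3$-$(q+1,k,\lambda)$ design for some positive integer $\lambda$. "$(q,k)$ gives a $3$-design" means the unique subgroup of order $k$ of $\mathbb{F}_q^\times$ is such a starter. *)

theory Defs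
  imports "HOL-Computational_Algebra.Primes"
begin

text \<open>The projective line PG(1,q) over a finite field 'a is modelled as 'a option:
  Some z is the point z of F_q, None is the point at infinity.\<close>

definition lft :: "'a::field \<Rightarrow> 'a \<Rightarrow> 'a \<Rightarrow> 'a \<Rightarrow> 'a option \<Rightarrow> 'a option" where
  "lft a b c d P = (case P of
      None \<Rightarrow> (if c = 0 then None else Some (a / c))
    | Some z \<Rightarrow> (if c * z + d = 0 then None else Some ((a * z + b) / (c * z + d))))"

definition PSL2 :: "('a::field option \<Rightarrow> 'a option) set" where
  "PSL2 = {lft a b c d | a b c d. \<exists>s. s \<noteq> 0 \<and> a * d - b * c = s ^ 2}"

definition PSL2_orbit :: "'a::field option set \<Rightarrow> 'a option set set" where
  "PSL2_orbit B = {g ` B | g. g \<in> PSL2}"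

text \<open>B is a starter of a 3-design: its PSL(2,q)-orbit is the block set of a
  3-(q+1,|B|,lambda) design for some positive integer lambda, i.e. every 3-subset of
  PG(1,q) lies in exactly lambda blocks of the orbit.\<close>

definition starter_3design :: "'a::{field,finite} option set \<Rightarrow> bool" where
  "starter_3design B \<longleftrightarrow>
     (\<exists>lam::nat. lam > 0 \<and>
        (\<forall>T :: 'a option set. card T = 3 \<longrightarrow> card {X \<in> PSL2_orbit B. T \<subseteq> X} = lam))"

text \<open>The subgroup of order k of the multiplicative group (for k dividing q-1).\<close>

definition mult_subgroup :: "nat \<Rightarrow> 'a::field set" where
  "mult_subgroup k = {x. x \<noteq> 0 \<and> x ^ k = 1}"

definition gives_3design :: "'a::{field,finite} itself \<Rightarrow> nat \<Rightarrow> bool" where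
  "gives_3design (_ :: 'a itself) k \<longleftrightarrow>
     starter_3design (Some ` (mult_subgroup k :: 'a set))"

end

theory Submission
  imports Defs "HOL-Computational_Algebra.Polynomial"
begin

lemma inv2_even:
  assumes "finite X" "\<And>x. x \<in> X \<Longrightarrow> f x \<in> X \<and> f (f x) = x \<and> f x \<noteq> x"
  shows "even (card X)"
  using assms
proof (induction "card X" arbitrary: X rule: less_induct)
  case less
  show ?case
  proof (cases "X = {}")
    case True then show ?thesis by simp
  next
    case False
    then obtain x where x: "x \<in> X" by blast
    define O' where "O' = {x, f x}"
    have O'X: "O' \<subseteq> X" using less.prems(2)[OF x] x unfolding O'_def by auto
    have cO: "card O' = 2" using less.prems(2)[OF x] unfolding O'_def by auto
    have cl: "y \<in> X - O' \<Longrightarrow> f y \<in> X - O' \<and> f (f y) = y \<and> f y \<noteq> y" for y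
      using less.prems(2)[of y] less.prems(2)[OF x] unfolding O'_def by auto
    have fin: "finite (X - O')" using less.prems(1) by auto
    have c: "card (X - O') = card X - 2" using card_Diff_subset[OF _ O'X] cO O'X less.prems(1)
      by (simp add: finite_subset)
    have lt: "card (X - O') < card X" using c cO card_mono[OF less.prems(1) O'X] by linarith
    have "even (card (X - O'))" using less.hyps[OF lt fin] cl by blast
    moreover have "card X \<ge> 2" using card_mono[OF less.prems(1) O'X] cO by simp
    ultimately show ?thesis using c by (metis add_diff_inverse_nat even_add not_less dvd_refl numeral_2_eq_2 even_Suc_Suc_iff)
  qed
qed

lemma inv3_dvd:
  assumes "finite X" "\<And>x. x \<in> X \<Longrightarrow> f x \<in> X \<and> f (f (f x)) = x \<and> f x \<noteq> x"
  shows "3 dvd (card X)"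
  using assms
proof (induction "card X" arbitrary: X rule: less_induct)
  case less
  show ?case
  proof (cases "X = {}")
    case True then show ?thesis by simp
  next
    case False
    then obtain x where x: "x \<in> X" by blast
    define O' where "O' = {x, f x, f (f x)}"
    have h1: "f x \<in> X" "f (f x) \<in> X" using less.prems(2)[OF x] less.prems(2)[of "f x"] by auto
    have d: "f (f x) \<noteq> x" "f (f x) \<noteq> f x"
      using less.prems(2)[OF x] less.prems(2)[of "f x"] h1 by metis+
    have O'X: "O' \<subseteq> X" using h1 x unfolding O'_def by auto
    have cO: "card O' = 3" using less.prems(2)[OF x] d unfolding O'_def by auto
    have cl: "y \<in> X - O' \<Longrightarrow> f y \<in> X - O' \<and> f (f (f y)) = y \<and> f y \<noteq> y" for y
      using less.prems(2)[of y] less.prems(2)[OF x] unfolding O'_def by auto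
    have fin: "finite (X - O')" using less.prems(1) by auto
    have c: "card (X - O') = card X - 3" using card_Diff_subset[OF _ O'X] cO O'X less.prems(1)
      by (simp add: finite_subset)
    have lt: "card (X - O') < card X" using c cO card_mono[OF less.prems(1) O'X] by linarith
    have "3 dvd (card (X - O'))" using less.hyps[OF lt fin] cl by blast
    moreover have "card X \<ge> 3" using card_mono[OF less.prems(1) O'X] cO by simp
    ultimately show ?thesis using c by (metis dvd_add_triv_right_iff le_add_diff_inverse2)
  qed
qed

lemma klein4_dvd:
  assumes "finite X"
    "\<And>x. x \<in> X \<Longrightarrow> f x \<in> X \<and> g x \<in> X \<and> f (f x) = x \<and> g (g x) = x \<and> f (g x) = g (f x)
          \<and> f x \<noteq> x \<and> g x \<noteq> x \<and> f (g x) \<noteq> x"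
  shows "4 dvd (card X)"
  using assms
proof (induction "card X" arbitrary: X rule: less_induct)
  case less
  show ?case
  proof (cases "X = {}")
    case True then show ?thesis by simp
  next
    case False
    then obtain x where x: "x \<in> X" by blast
    define O' where "O' = {x, f x, g x, f (g x)}"
    note hx = less.prems(2)[OF x]
    have h1: "f (g x) \<in> X" using hx less.prems(2)[of "g x"] by auto
    have hg: "f (f (g x)) = g x" using hx less.prems(2)[of "g x"] by auto
    have d: "f x \<noteq> g x" "f x \<noteq> f (g x)" "g x \<noteq> f (g x)"
      using hx hg less.prems(2)[of "g x"] by metis+
    have O'X: "O' \<subseteq> X" using h1 x hx unfolding O'_def by auto
    have cO: "card O' = 4" using hx d unfolding O'_def by auto
    have cl: "y \<in> X - O' \<Longrightarrow> f y \<in> X - O' \<and> g y \<in> X - O' \<and> f (f y) = y \<and> g (g y) = y \<and> f (g y) = g (f y)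
          \<and> f y \<noteq> y \<and> g y \<noteq> y \<and> f (g y) \<noteq> y" for y
    proof -
      assume y: "y \<in> X - O'"
      have hy: "f y \<in> X \<and> g y \<in> X \<and> f (f y) = y \<and> g (g y) = y \<and> f (g y) = g (f y)
          \<and> f y \<noteq> y \<and> g y \<noteq> y \<and> f (g y) \<noteq> y" using less.prems(2)[of y] y by auto
      have hgg: "g (f (g x)) = f x" using hx less.prems(2)[of "f x"] by metis
      have fO: "f ` O' \<subseteq> O'" "g ` O' \<subseteq> O'" using hx hg hgg unfolding O'_def by auto
      have "f y \<notin> O'" using hy fO(1) y by (metis DiffD2 image_eqI subsetD)
      moreover have "g y \<notin> O'" using hy fO(2) y by (metis DiffD2 image_eqI subsetD)
      ultimately show ?thesis using hy by auto
    qed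
    have fin: "finite (X - O')" using less.prems(1) by auto
    have c: "card (X - O') = card X - 4" using card_Diff_subset[OF _ O'X] cO O'X less.prems(1)
      by (simp add: finite_subset)
    have lt: "card (X - O') < card X" using c cO card_mono[OF less.prems(1) O'X] by linarith
    have "4 dvd (card (X - O'))" using less.hyps[OF lt fin] cl by blast
    moreover have "card X \<ge> 4" using card_mono[OF less.prems(1) O'X] cO by simp
    ultimately show ?thesis using c by (metis dvd_add_triv_right_iff le_add_diff_inverse2)
  qed
qed

definition sqr :: "'a::field \<Rightarrow> bool" where "sqr y \<longleftrightarrow> (\<exists>s. s \<noteq> 0 \<and> y = s^2)"

lemma roots_unity_card:
  fixes n :: nat assumes "n \<ge> 1"
  shows "card {x::'a::field. x^n = 1} \<le> n"
proof -
  define p :: "'a poly" where "p = monom 1 n - 1"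
  have pe: "poly p x = x^n - 1" for x by (simp add: p_def poly_monom)
  have dp: "degree p = n" unfolding p_def using assms
    using degree_add_eq_left[of "- 1" "monom (1::'a) n"] by (simp add: degree_monom_eq)
  have "p \<noteq> 0" using dp assms pe by (metis degree_0 not_one_le_zero)
  then have "card {x. poly p x = 0} \<le> n" using card_poly_roots_bound dp by metis
  moreover have "{x. poly p x = 0} = {x::'a. x^n = 1}" using pe by auto
  ultimately show ?thesis by simp
qed

lemma card_nz: "card (UNIV - {0::'a::{field,finite}}) = card (UNIV::'a set) - 1"
  by (simp add: card_Diff_subset)

lemma fermat:
  fixes x :: "'a::{field,finite}" assumes "x \<noteq> 0"
  shows "x ^ (card (UNIV::'a set) - 1) = 1"
proof -
  define N where "N = (UNIV - {0::'a})"
  have fin: "finite N" by simp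
  have bij: "bij_betw ((*) x) N N" unfolding bij_betw_def inj_on_def
  proof
    show "\<forall>a\<in>N. \<forall>b\<in>N. x * a = x * b \<longrightarrow> a = b" using assms by auto
    show "(*) x ` N = N"
    proof
      show "(*) x ` N \<subseteq> N" using assms unfolding N_def by auto
      show "N \<subseteq> (*) x ` N"
      proof
        fix y assume "y \<in> N"
        then have "y / x \<in> N" "y = x * (y / x)" using assms unfolding N_def by auto
        then show "y \<in> (*) x ` N" by blast
      qed
    qed
  qed
  have "prod (\<lambda>y. x * y) N = prod id N" using prod.reindex_bij_betw[OF bij, of id] by simp
  moreover have "prod (\<lambda>y. x * y) N = x ^ card N * prod id N" by (simp add: prod.distrib)
  moreover have "prod id N \<noteq> 0" using fin unfolding N_def by (simp add: prod_zero_iff)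
  ultimately have "x ^ card N = 1" by simp
  then show ?thesis using card_nz unfolding N_def by simp
qed

lemma msub_card:
  assumes "k dvd card (UNIV::'a::{field,finite} set) - 1" "k > 0"
  shows "card (mult_subgroup k :: 'a set) = k"
proof -
  define q where "q = card (UNIV::'a set)"
  obtain e where e: "q - 1 = k * e" using assms(1) unfolding q_def by auto
  have q1: "q > 1"
  proof -
    have "card {0::'a, 1} \<le> q" unfolding q_def by (rule card_mono) auto
    then show ?thesis by simp
  qed
  have epos: "e > 0" using e q1 by (metis gr0I mult_0_right zero_less_diff)
  define B where "B = (mult_subgroup k :: 'a set)"
  have "card B \<le> card {x::'a. x^k = 1}" unfolding B_def mult_subgroup_def by (rule card_mono) auto
  also have "\<dots> \<le> k" using roots_unity_card[of k] assms(2) by simp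
  finally have up: "card B \<le> k" .
  define R where "R = {t::'a. t^e = 1}"
  define fib where "fib t = {x::'a. x \<noteq> 0 \<and> x^k = t}" for t
  have cover: "UNIV - {0} \<subseteq> (\<Union>t\<in>R. fib t)"
  proof
    fix x :: 'a assume "x \<in> UNIV - {0}"
    then have x0: "x \<noteq> 0" by auto
    have "(x^k)^e = 1" using fermat[OF x0] e unfolding q_def by (simp add: power_mult)
    then show "x \<in> (\<Union>t\<in>R. fib t)" using x0 unfolding R_def fib_def by auto
  qed
  have fibc: "card (fib t) \<le> card B" for t
  proof (cases "fib t = {}")
    case True then show ?thesis by simp
  next
    case False
    then obtain x0 where x0: "x0 \<noteq> 0" "x0^k = t" unfolding fib_def by auto
    have "fib t \<subseteq> (\<lambda>b. x0 * b) ` B"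
    proof
      fix x assume "x \<in> fib t"
      then have x: "x \<noteq> 0" "x^k = t" unfolding fib_def by auto
      have "t \<noteq> 0" using x by auto
      then have "x / x0 \<in> B" using x x0 unfolding B_def mult_subgroup_def by (simp add: power_divide)
      moreover have "x = x0 * (x / x0)" using x0 by simp
      ultimately show "x \<in> (\<lambda>b. x0 * b) ` B" by blast
    qed
    then have "card (fib t) \<le> card ((\<lambda>b. x0 * b) ` B)" by (rule card_mono[rotated]) simp
    also have "\<dots> \<le> card B" by (rule card_image_le) simp
    finally show ?thesis .
  qed
  have "q - 1 \<le> card (\<Union>t\<in>R. fib t)" using card_mono[OF _ cover] card_nz unfolding q_def by simp
  also have "\<dots> \<le> (\<Sum>t\<in>R. card (fib t))" by (rule card_UN_le) simp
  also have "\<dots> \<le> (\<Sum>t\<in>R. card B)" by (rule sum_mono) (rule fibc)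
  also have "\<dots> = card R * card B" by simp
  also have "\<dots> \<le> e * card B" using roots_unity_card[of e, where 'a='a] epos unfolding R_def by simp
  finally have "k * e \<le> e * card B" using e by simp
  then have "k \<le> card B" using epos by (simp add: mult.commute)
  then show ?thesis using up unfolding B_def by simp
qed

lemma card_gt1: "card (UNIV::'a::{field,finite} set) > 1"
proof -
  have "card {0::'a, 1} \<le> card (UNIV::'a set)" by (rule card_mono) auto
  then show ?thesis by simp
qed

lemma two_nz:
  assumes "odd (card (UNIV::'a::{field,finite} set))"
  shows "(2::'a) \<noteq> 0"
proof
  assume h: "(2::'a) = 0"
  have "even (card (UNIV::'a set))"
  proof (rule inv2_even[where f="\<lambda>x. x + 1"])
    fix x :: 'a
    have "x + 1 + 1 = x + 2" by simp
    then show "x + 1 \<in> UNIV \<and> x + 1 + 1 = x \<and> x + 1 \<noteq> x" using h by simp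
  qed simp
  then show False using assms by simp
qed

lemma sqr_card:
  assumes "odd (card (UNIV::'a::{field,finite} set))"
  shows "card {y::'a. sqr y} = (card (UNIV::'a set) - 1) div 2"
    and "\<And>y::'a. y \<noteq> 0 \<Longrightarrow> sqr y \<longleftrightarrow> y ^ ((card (UNIV::'a set) - 1) div 2) = 1"
proof -
  define q where "q = card (UNIV::'a set)"
  define h where "h = (q - 1) div 2"
  have q1: "q > 1" using card_gt1 unfolding q_def by blast
  have qh: "q - 1 = 2 * h" using assms q1 unfolding h_def q_def by auto
  have h1: "h \<ge> 1" using assms q1 qh unfolding q_def by (cases "h = 0") auto
  define Sq where "Sq = {y::'a. sqr y}"
  define R where "R = {y::'a. y ^ h = 1}"
  have SR: "Sq \<subseteq> R"
  proof
    fix y assume "y \<in> Sq"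
    then obtain s where s: "s \<noteq> 0" "y = s^2" unfolding Sq_def sqr_def by auto
    have "y ^ h = s ^ (q - 1)" using s qh by (simp add: power_mult)
    then show "y \<in> R" using fermat[OF s(1)] unfolding R_def q_def by simp
  qed
  have cR: "card R \<le> h" unfolding R_def using roots_unity_card[OF h1, where 'a='a] .
  define fib where "fib y = {s::'a. s \<noteq> 0 \<and> s^2 = y}" for y
  have cover: "UNIV - {0} \<subseteq> (\<Union>y\<in>Sq. fib y)"
    unfolding Sq_def fib_def sqr_def by auto
  have fibc: "card (fib y) \<le> 2" for y
  proof (cases "fib y = {}")
    case True then show ?thesis by simp
  next
    case False
    then obtain s0 where s0: "s0 \<noteq> 0" "s0^2 = y" unfolding fib_def by auto
    have "fib y \<subseteq> {s0, -s0}"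
    proof
      fix s assume "s \<in> fib y"
      then have "s^2 = s0^2" using s0 unfolding fib_def by auto
      then have "(s - s0) * (s + s0) = 0" by (simp add: algebra_simps power2_eq_square)
      then show "s \<in> {s0, -s0}" by (auto simp: add_eq_0_iff2)
    qed
    then have "card (fib y) \<le> card {s0, -s0}" by (rule card_mono[rotated]) simp
    also have "\<dots> \<le> 2" by (simp add: card_insert_le_m1)
    finally show ?thesis .
  qed
  have "q - 1 \<le> card (\<Union>y\<in>Sq. fib y)" using card_mono[OF _ cover] card_nz unfolding q_def by simp
  also have "\<dots> \<le> (\<Sum>y\<in>Sq. card (fib y))" by (rule card_UN_le) simp
  also have "\<dots> \<le> (\<Sum>y\<in>Sq. 2)" by (rule sum_mono) (rule fibc)
  also have "\<dots> = 2 * card Sq" by simp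
  finally have "h \<le> card Sq" using qh by simp
  moreover have "card Sq \<le> card R" by (rule card_mono) (simp_all add: SR)
  ultimately have cS: "card Sq = h" "card Sq = card R" using cR by linarith+
  have SeR: "Sq = R" using card_subset_eq[OF _ SR] cS(2) by simp
  show "card {y::'a. sqr y} = (card (UNIV::'a set) - 1) div 2" using cS unfolding Sq_def h_def q_def by simp
  show "sqr y \<longleftrightarrow> y ^ ((card (UNIV::'a set) - 1) div 2) = 1" if "y \<noteq> 0" for y :: 'a
    using SeR unfolding Sq_def R_def h_def q_def by blast
qed

lemma pow_half:
  assumes "odd (card (UNIV::'a::{field,finite} set))" "(y::'a) \<noteq> 0"
  shows "y ^ ((card (UNIV::'a set) - 1) div 2) = 1 \<or> y ^ ((card (UNIV::'a set) - 1) div 2) = -1"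
proof -
  define h where "h = (card (UNIV::'a set) - 1) div 2"
  have q1: "card (UNIV::'a set) > 1" using card_gt1 by blast
  have qh: "card (UNIV::'a set) - 1 = 2 * h" using assms q1 unfolding h_def by auto
  have "(y^h)^2 = 1" using fermat[OF assms(2)] qh by (simp add: power_mult[symmetric] mult.commute)
  then have "(y^h - 1) * (y^h + 1) = 0" by (simp add: algebra_simps power2_eq_square)
  then show ?thesis unfolding h_def by (auto simp: add_eq_0_iff2)
qed

lemma nonsq_exists:
  assumes "odd (card (UNIV::'a::{field,finite} set))"
  shows "\<exists>n::'a. n \<noteq> 0 \<and> \<not> sqr n"
proof (rule ccontr)
  assume "\<not> ?thesis"
  then have "UNIV - {0} \<subseteq> {y::'a. sqr y}" by auto
  then have "card (UNIV - {0::'a}) \<le> card {y::'a. sqr y}" by (rule card_mono[rotated]) simp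
  then have "card (UNIV::'a set) - 1 \<le> (card (UNIV::'a set) - 1) div 2" using sqr_card(1)[OF assms] card_nz by metis
  then show False using card_gt1[where 'a='a] by linarith
qed

lemma sqr_mult_sq: "(c::'a::field) \<noteq> 0 \<Longrightarrow> sqr (c^2 * d) \<longleftrightarrow> sqr d"
  unfolding sqr_def
proof
  assume c: "c \<noteq> 0" and "\<exists>s. s \<noteq> 0 \<and> c\<^sup>2 * d = s\<^sup>2"
  then obtain s where s: "s \<noteq> 0" "c^2 * d = s^2" by auto
  then have "d = (s / c)^2" using c by (simp add: power_divide field_simps)
  then show "\<exists>s. s \<noteq> 0 \<and> d = s\<^sup>2" using s c by (intro exI[of _ "s/c"]) auto
next
  assume c: "c \<noteq> 0" and "\<exists>s. s \<noteq> 0 \<and> d = s\<^sup>2"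
  then obtain s where s: "s \<noteq> 0" "d = s^2" by auto
  then show "\<exists>s. s \<noteq> 0 \<and> c\<^sup>2 * d = s\<^sup>2" using c by (intro exI[of _ "c*s"]) (simp add: power_mult_distrib)
qed

lemma sqr_mult_sqr: "sqr (m::'a::field) \<Longrightarrow> sqr (m * d) \<longleftrightarrow> sqr d"
  using sqr_mult_sq unfolding sqr_def by (metis mult.commute)

lemma sqr_nz: "sqr (y::'a::field) \<Longrightarrow> y \<noteq> 0"
  unfolding sqr_def by auto

lemma nonsq_mult:
  assumes "odd (card (UNIV::'a::{field,finite} set))" "(n::'a) \<noteq> 0" "\<not> sqr n" "(d::'a) \<noteq> 0"
  shows "sqr (n * d) \<longleftrightarrow> \<not> sqr d"
proof -
  define h where "h = (card (UNIV::'a set) - 1) div 2"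
  have m1: "(-1::'a) \<noteq> 1" using two_nz[OF assms(1)] by (metis one_add_one add_eq_0_iff2)
  have nh: "n^h = -1" using pow_half[OF assms(1,2)] sqr_card(2)[OF assms(1) assms(2)] assms(3) unfolding h_def by auto
  have nd: "n * d \<noteq> 0" using assms by simp
  show ?thesis
  proof (cases "sqr d")
    case True
    then have "d^h = 1" using sqr_card(2)[OF assms(1) assms(4)] unfolding h_def by simp
    then have "(n*d)^h = -1" using nh by (simp add: power_mult_distrib)
    then show ?thesis using True sqr_card(2)[OF assms(1) nd] m1 unfolding h_def by auto
  next
    case False
    then have "d^h = -1" using pow_half[OF assms(1,4)] sqr_card(2)[OF assms(1) assms(4)] unfolding h_def by auto
    then have "(n*d)^h = 1" using nh by (simp add: power_mult_distrib)
    then show ?thesis using False sqr_card(2)[OF assms(1) nd] unfolding h_def by auto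
  qed
qed

fun vec :: "'a::field option \<Rightarrow> 'a \<times> 'a" where
  "vec None = (1, 0)" | "vec (Some z) = (z, 1)"

definition dt :: "'a::field \<times> 'a \<Rightarrow> 'a \<times> 'a \<Rightarrow> 'a" where
  "dt u v = fst u * snd v - snd u * fst v"

definition DD :: "'a::field option \<Rightarrow> 'a option \<Rightarrow> 'a option \<Rightarrow> 'a" where
  "DD P Q R = dt (vec P) (vec Q) * dt (vec Q) (vec R) * dt (vec P) (vec R)"

lemma dt_vec_0: "dt (vec P) (vec Q) = 0 \<longleftrightarrow> P = Q"
  by (cases P; cases Q) (auto simp: dt_def)

definition mu :: "'a::field \<Rightarrow> 'a \<Rightarrow> 'a \<Rightarrow> 'a \<Rightarrow> 'a option \<Rightarrow> 'a" where
  "mu a b c d P = (case P of None \<Rightarrow> (if c = 0 then 1/a else 1/c)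
     | Some z \<Rightarrow> (if c*z+d = 0 then 1/(a*z+b) else 1/(c*z+d)))"

lemma lft_vec:
  fixes a b c d :: "'a::field"
  assumes "a*d - b*c \<noteq> 0"
  shows "mu a b c d P \<noteq> 0 \<and> vec (lft a b c d P) =
     (mu a b c d P * (a * fst (vec P) + b * snd (vec P)), mu a b c d P * (c * fst (vec P) + d * snd (vec P)))"
proof (cases P)
  case None
  then show ?thesis using assms by (auto simp: lft_def mu_def)
next
  case (Some z)
  show ?thesis
  proof (cases "c*z+d = 0")
    case True
    then have "d = - c*z" by (simp add: eq_neg_iff_add_eq_0 add.commute)
    then have "a*d - b*c = - c*(a*z+b)" by (simp add: algebra_simps)
    then have "a*z+b \<noteq> 0" using assms by auto
    then show ?thesis using True Some by (auto simp: lft_def mu_def)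
  next
    case False
    then show ?thesis using Some by (auto simp: lft_def mu_def)
  qed
qed

lemma DD_lft:
  fixes a b c d :: "'a::field"
  assumes "a*d - b*c \<noteq> 0"
  shows "DD (lft a b c d P) (lft a b c d Q) (lft a b c d R) =
    (mu a b c d P * mu a b c d Q * mu a b c d R)^2 * (a*d-b*c)^3 * DD P Q R"
proof -
  have g: "dt (m * (a * u1 + b * u2), m * (c * u1 + d * u2)) (n * (a * v1 + b * v2), n * (c * v1 + d * v2))
     = m * n * (a*d - b*c) * dt (u1,u2) (v1,v2)" for m n u1 u2 v1 v2 :: 'a
    unfolding dt_def by (simp add: algebra_simps)
  have e: "dt (vec (lft a b c d X)) (vec (lft a b c d Y)) = mu a b c d X * mu a b c d Y * (a*d-b*c) * dt (vec X) (vec Y)" for X Y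
    using lft_vec[OF assms, of X] lft_vec[OF assms, of Y] g[of "mu a b c d X" "fst (vec X)" "snd (vec X)" "mu a b c d Y" "fst (vec Y)" "snd (vec Y)"]
    by simp
  show ?thesis unfolding DD_def e by (simp add: power2_eq_square power3_eq_cube mult_ac)
qed

lemma lft_inj:
  fixes a b c d :: "'a::field"
  assumes "a*d - b*c \<noteq> 0"
  shows "inj (lft a b c d)"
proof
  fix P Q assume h: "lft a b c d P = lft a b c d Q"
  have "dt (vec (lft a b c d P)) (vec (lft a b c d Q)) = 0" using h dt_vec_0 by blast
  moreover have "dt (vec (lft a b c d P)) (vec (lft a b c d Q)) = mu a b c d P * mu a b c d Q * (a*d-b*c) * dt (vec P) (vec Q)"
    using lft_vec[OF assms, of P] lft_vec[OF assms, of Q] unfolding dt_def by (simp add: algebra_simps)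
  ultimately show "P = Q" using lft_vec[OF assms, of P] lft_vec[OF assms, of Q] assms dt_vec_0 by auto
qed

lemma PSL2_props:
  assumes "g \<in> PSL2"
  shows "inj g" "\<And>P Q R. sqr (DD (g P) (g Q) (g R)) \<longleftrightarrow> sqr (DD P Q R)"
proof -
  obtain a b c d s where g: "g = lft a b c d" and s: "s \<noteq> 0" "a*d - b*c = s^2"
    using assms unfolding PSL2_def by auto
  have det: "a*d - b*c \<noteq> 0" using s by simp
  show "inj g" using lft_inj[OF det] g by simp
  fix P Q R
  have "DD (g P) (g Q) (g R) = (mu a b c d P * mu a b c d Q * mu a b c d R * s^3)^2 * DD P Q R"
  proof -
    have "(s^2)^3 = (s^3)^2" by (simp flip: power_mult)
    then show ?thesis unfolding g DD_lft[OF det] s(2) by (simp add: power_mult_distrib)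
  qed
  moreover have "mu a b c d P * mu a b c d Q * mu a b c d R * s^3 \<noteq> 0"
    using lft_vec[OF det] s by simp
  ultimately show "sqr (DD (g P) (g Q) (g R)) \<longleftrightarrow> sqr (DD P Q R)" using sqr_mult_sq by metis
qed

lemma id_PSL2: "(\<lambda>x. x) \<in> PSL2"
proof -
  have "(\<lambda>x. x) = lft (1::'a) 0 0 1" by (rule ext) (auto simp: lft_def split: option.split)
  moreover have "\<exists>s::'a. s \<noteq> 0 \<and> (1::'a) * 1 - 0 * 0 = s^2" by (intro exI[of _ 1]) simp
  ultimately show ?thesis unfolding PSL2_def by blast
qed

definition s3 :: "'b \<times> 'b \<times> 'b \<Rightarrow> 'b set" where
  "s3 t = {fst t, fst (snd t), snd (snd t)}"

definition m3 :: "('b \<Rightarrow> 'c) \<Rightarrow> 'b \<times> 'b \<times> 'b \<Rightarrow> 'c \<times> 'c \<times> 'c" where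
  "m3 g t = (g (fst t), g (fst (snd t)), g (snd (snd t)))"

lemma card_filter_sum: "finite A \<Longrightarrow> card {x\<in>A. P x} = (\<Sum>x\<in>A. if P x then 1 else 0)"
  by (simp add: sum.inter_filter[symmetric])

lemma orbit_count:
  fixes SB :: "'a::{field,finite} option set" and Cp :: "'a option \<times> 'a option \<times> 'a option \<Rightarrow> bool"
  assumes lam: "\<forall>T::'a option set. card T = 3 \<longrightarrow> card {X \<in> PSL2_orbit SB. T \<subseteq> X} = lam"
    and dist: "\<And>t. Cp t \<Longrightarrow> card (s3 t) = 3"
    and inv: "\<And>g t. g \<in> PSL2 \<Longrightarrow> Cp (m3 g t) \<longleftrightarrow> Cp t"
  shows "lam * card {t. Cp t} = card (PSL2_orbit SB) * card {t. Cp t \<and> s3 t \<subseteq> SB}"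
proof -
  define O' where "O' = PSL2_orbit SB"
  define A where "A = {t. Cp t}"
  have fO: "finite O'" and fA: "finite A" by simp_all
  have "lam * card A = (\<Sum>t\<in>A. card {X\<in>O'. s3 t \<subseteq> X})"
    using lam dist unfolding O'_def A_def by simp
  also have "\<dots> = (\<Sum>t\<in>A. \<Sum>X\<in>O'. if s3 t \<subseteq> X then 1 else 0)"
    by (rule sum.cong[OF refl]) (rule card_filter_sum[OF fO])
  also have "\<dots> = (\<Sum>X\<in>O'. \<Sum>t\<in>A. if s3 t \<subseteq> X then 1 else 0)" by (rule sum.swap)
  also have "\<dots> = (\<Sum>X\<in>O'. card {t\<in>A. s3 t \<subseteq> X})"
    by (rule sum.cong[OF refl]) (rule card_filter_sum[OF fA, symmetric])
  also have "\<dots> = (\<Sum>X\<in>O'. card {t. Cp t \<and> s3 t \<subseteq> SB})"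
  proof (rule sum.cong[OF refl])
    fix X assume "X \<in> O'"
    then obtain g where g: "g \<in> PSL2" "X = g ` SB" unfolding O'_def PSL2_orbit_def by auto
    have ig: "inj g" using PSL2_props(1)[OF g(1)] .
    have im: "m3 g ` {t. Cp t \<and> s3 t \<subseteq> SB} = {t\<in>A. s3 t \<subseteq> X}"
    proof
      show "m3 g ` {t. Cp t \<and> s3 t \<subseteq> SB} \<subseteq> {t\<in>A. s3 t \<subseteq> X}"
        using inv[OF g(1)] g(2) unfolding A_def s3_def m3_def by auto
      show "{t\<in>A. s3 t \<subseteq> X} \<subseteq> m3 g ` {t. Cp t \<and> s3 t \<subseteq> SB}"
      proof
        fix t assume t: "t \<in> {t\<in>A. s3 t \<subseteq> X}"
        obtain P Q R where tt: "t = (P,Q,R)" by (cases t) auto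
        have "P \<in> g ` SB" "Q \<in> g ` SB" "R \<in> g ` SB" using t g(2) unfolding tt s3_def by auto
        then obtain P' Q' R' where p: "P' \<in> SB" "Q' \<in> SB" "R' \<in> SB" "P = g P'" "Q = g Q'" "R = g R'" by blast
        have e: "t = m3 g (P',Q',R')" unfolding tt m3_def p by simp
        have "Cp (P',Q',R')" using t e inv[OF g(1)] unfolding A_def by auto
        then show "t \<in> m3 g ` {t. Cp t \<and> s3 t \<subseteq> SB}" using e p unfolding s3_def by auto
      qed
    qed
    have "inj (m3 g)" using ig unfolding inj_def m3_def by auto
    then have "card (m3 g ` {t. Cp t \<and> s3 t \<subseteq> SB}) = card {t. Cp t \<and> s3 t \<subseteq> SB}"
      by (simp add: card_image inj_on_subset)
    then show "card {t\<in>A. s3 t \<subseteq> X} = card {t. Cp t \<and> s3 t \<subseteq> SB}" using im by simp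
  qed
  also have "\<dots> = card O' * card {t. Cp t \<and> s3 t \<subseteq> SB}" by simp
  finally show ?thesis unfolding O'_def A_def .
qed

definition goodp :: "'a::field option \<times> 'a option \<times> 'a option \<Rightarrow> bool" where
  "goodp t \<longleftrightarrow> card (s3 t) = 3 \<and> sqr (DD (fst t) (fst (snd t)) (snd (snd t)))"
definition badp :: "'a::field option \<times> 'a option \<times> 'a option \<Rightarrow> bool" where
  "badp t \<longleftrightarrow> card (s3 t) = 3 \<and> \<not> sqr (DD (fst t) (fst (snd t)) (snd (snd t)))"

lemma s3_m3_card: "inj g \<Longrightarrow> card (s3 (m3 g t)) = card (s3 t)"
proof -
  assume "inj g"
  have "s3 (m3 g t) = g ` s3 t" unfolding s3_def m3_def by auto
  then show ?thesis using \<open>inj g\<close> by (simp add: card_image inj_on_subset)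
qed

lemma good_bad_balance:
  fixes SB :: "'a::{field,finite} option set"
  assumes "starter_3design SB" "odd (card (UNIV::'a set))"
  shows "card {t. goodp t \<and> s3 t \<subseteq> SB} = card {t. badp t \<and> s3 t \<subseteq> SB}"
proof -
  obtain lam :: nat where lam: "lam > 0" "\<forall>T::'a option set. card T = 3 \<longrightarrow> card {X \<in> PSL2_orbit SB. T \<subseteq> X} = lam"
    using assms(1) unfolding starter_3design_def by blast
  have invg: "goodp (m3 g t) \<longleftrightarrow> goodp t" if "g \<in> PSL2" for g and t :: "'a option \<times> 'a option \<times> 'a option"
    using PSL2_props[OF that] s3_m3_card[of g t] unfolding goodp_def m3_def by auto
  have invb: "badp (m3 g t) \<longleftrightarrow> badp t" if "g \<in> PSL2" for g and t :: "'a option \<times> 'a option \<times> 'a option"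
    using PSL2_props[OF that] s3_m3_card[of g t] unfolding badp_def m3_def by auto
  have eg: "lam * card {t::'a option \<times> 'a option \<times> 'a option. goodp t} = card (PSL2_orbit SB) * card {t. goodp t \<and> s3 t \<subseteq> SB}"
    by (rule orbit_count[OF lam(2)], simp add: goodp_def, simp add: invg)
  have eb: "lam * card {t::'a option \<times> 'a option \<times> 'a option. badp t} = card (PSL2_orbit SB) * card {t. badp t \<and> s3 t \<subseteq> SB}"
    by (rule orbit_count[OF lam(2)], simp add: badp_def, simp add: invb)
  obtain n :: 'a where n: "n \<noteq> 0" "\<not> sqr n" using nonsq_exists[OF assms(2)] by blast
  define h where "h = lft n 0 0 1"
  have hdet: "n * 1 - 0 * 0 \<noteq> 0" using n by simp
  have ih: "inj h" unfolding h_def by (rule lft_inj[OF hdet])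
  have hD: "sqr (DD (h P) (h Q) (h R)) \<longleftrightarrow> \<not> sqr (DD P Q R)" if "DD P Q R \<noteq> 0" for P Q R
  proof -
    define m where "m = mu n 0 0 1 P * mu n 0 0 1 Q * mu n 0 0 1 R * n"
    have m0: "m \<noteq> 0" unfolding m_def using lft_vec[OF hdet] n by simp
    have "DD (h P) (h Q) (h R) = m^2 * (n * DD P Q R)"
      unfolding h_def DD_lft[OF hdet] m_def by (simp add: power2_eq_square power3_eq_cube mult_ac)
    then show ?thesis using sqr_mult_sq[OF m0] nonsq_mult[OF assms(2) n that] by simp
  qed
  have DDnz: "DD (fst t) (fst (snd t)) (snd (snd t)) \<noteq> 0" if "card (s3 t) = 3" for t :: "'a option \<times> 'a option \<times> 'a option"
  proof -
    have "fst t \<noteq> fst (snd t)" "fst (snd t) \<noteq> snd (snd t)" "fst t \<noteq> snd (snd t)"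
      using that unfolding s3_def by (auto simp: card_insert_if split: if_splits)
    then show ?thesis unfolding DD_def by (simp add: dt_vec_0)
  qed
  have im: "inj (m3 h)" using ih unfolding inj_def m3_def by auto
  have "card {t::'a option \<times> 'a option \<times> 'a option. goodp t} \<le> card {t::'a option \<times> 'a option \<times> 'a option. badp t}"
  proof (rule card_inj_on_le[of "m3 h"])
    show "inj_on (m3 h) {t::'a option \<times> 'a option \<times> 'a option. goodp t}" using im by (metis inj_on_subset subset_UNIV)
    show "m3 h ` {t::'a option \<times> 'a option \<times> 'a option. goodp t} \<subseteq> {t::'a option \<times> 'a option \<times> 'a option. badp t}"
      using hD DDnz s3_m3_card[OF ih] unfolding goodp_def badp_def m3_def by auto
  qed simp
  moreover have "card {t::'a option \<times> 'a option \<times> 'a option. badp t} \<le> card {t::'a option \<times> 'a option \<times> 'a option. goodp t}"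
  proof (rule card_inj_on_le[of "m3 h"])
    show "inj_on (m3 h) {t::'a option \<times> 'a option \<times> 'a option. badp t}" using im by (metis inj_on_subset subset_UNIV)
    show "m3 h ` {t::'a option \<times> 'a option \<times> 'a option. badp t} \<subseteq> {t::'a option \<times> 'a option \<times> 'a option. goodp t}"
      using hD DDnz s3_m3_card[OF ih] unfolding goodp_def badp_def m3_def by auto
  qed simp
  ultimately have "card {t::'a option \<times> 'a option \<times> 'a option. goodp t} = card {t::'a option \<times> 'a option \<times> 'a option. badp t}" by simp
  then have "card (PSL2_orbit SB) * card {t. goodp t \<and> s3 t \<subseteq> SB} = card (PSL2_orbit SB) * card {t. badp t \<and> s3 t \<subseteq> SB}"
    using eg eb by metis
  moreover have "SB \<in> PSL2_orbit SB" unfolding PSL2_orbit_def using id_PSL2 by force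
  then have "card (PSL2_orbit SB) > 0" by (auto simp: card_gt_0_iff)
  ultimately show ?thesis by (auto simp del: mult_cancel_left)
qed

definition del :: "'a::field \<Rightarrow> 'a \<Rightarrow> 'a \<Rightarrow> 'a" where
  "del x y z = (x - y) * (y - z) * (x - z)"

lemma sqr_neg: "sqr (-1::'a::field) \<Longrightarrow> sqr (- d) \<longleftrightarrow> sqr (d::'a)"
  using sqr_mult_sqr[of "-1" d] by simp

locale grp =
  fixes B :: "'a::{field,finite} set"
  assumes one: "1 \<in> B" and mul: "\<And>x y. x \<in> B \<Longrightarrow> y \<in> B \<Longrightarrow> x * y \<in> B"
    and inv: "\<And>x. x \<in> B \<Longrightarrow> inverse x \<in> B" and nz: "0 \<notin> B"
    and sq: "\<And>x. x \<in> B \<Longrightarrow> sqr x" and m1: "sqr (-1::'a)" and two: "(2::'a) \<noteq> 0"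
begin

definition inZ :: "'a \<Rightarrow> 'a \<Rightarrow> bool" where
  "inZ y z \<longleftrightarrow> y \<in> B \<and> z \<in> B \<and> y \<noteq> 1 \<and> z \<noteq> 1 \<and> y \<noteq> z \<and> \<not> sqr (del 1 y z)"

definition ZN where "ZN = {p. inZ (fst p) (snd p)}"

lemma nz': "x \<in> B \<Longrightarrow> x \<noteq> 0" using nz by auto

lemma swapZ: "inZ y z \<Longrightarrow> inZ z y"
proof -
  assume h: "inZ y z"
  have "del 1 z y = - del 1 y z" unfolding del_def by (simp add: algebra_simps)
  then show ?thesis using h sqr_neg[OF m1] unfolding inZ_def by auto
qed

lemma tauZ: "inZ y z \<Longrightarrow> inZ (inverse y) (inverse z)"
proof -
  assume h: "inZ y z"
  then have y: "y \<in> B" "y \<noteq> 0" "y \<noteq> 1" and z: "z \<in> B" "z \<noteq> 0" "z \<noteq> 1" and yz: "y \<noteq> z"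
    unfolding inZ_def using nz' by auto
  have "del 1 (inverse y) (inverse z) = (inverse (y*z))^2 * (- del 1 y z)"
    unfolding del_def using y z by (simp add: field_simps power2_eq_square)
  then have "sqr (del 1 (inverse y) (inverse z)) \<longleftrightarrow> sqr (del 1 y z)"
    using sqr_mult_sq[of "inverse (y*z)"] sqr_neg[OF m1] y z by simp
  moreover have "inverse y \<noteq> 1" "inverse z \<noteq> 1" "inverse y \<noteq> inverse z" using y z yz
    by (auto simp: inverse_eq_divide field_simps)
  ultimately show ?thesis using h inv y z unfolding inZ_def by auto
qed

definition rho :: "'a \<times> 'a \<Rightarrow> 'a \<times> 'a" where
  "rho p = (snd p * inverse (fst p), inverse (fst p))"

lemma rhoZ: "inZ y z \<Longrightarrow> inZ (z * inverse y) (inverse y)"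
proof -
  assume h: "inZ y z"
  then have y: "y \<in> B" "y \<noteq> 0" "y \<noteq> 1" and z: "z \<in> B" "z \<noteq> 0" "z \<noteq> 1" and yz: "y \<noteq> z"
    unfolding inZ_def using nz' by auto
  have "del 1 (z * inverse y) (inverse y) = (inverse y)^2 * (inverse y * del 1 y z)"
    unfolding del_def using y z by (simp add: field_simps power2_eq_square)
  then have "sqr (del 1 (z * inverse y) (inverse y)) \<longleftrightarrow> sqr (del 1 y z)"
    using sqr_mult_sq[of "inverse y"] sqr_mult_sqr[OF sq[OF inv[OF y(1)]]] y by simp
  moreover have "z * inverse y \<noteq> 1" "inverse y \<noteq> 1" "z * inverse y \<noteq> inverse y" using y z yz
    by (auto simp: inverse_eq_divide field_simps)
  moreover have "z * inverse y \<in> B" "inverse y \<in> B" using mul inv y z by auto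
  ultimately show ?thesis using h unfolding inZ_def by auto
qed

lemma rho3: "inZ (fst p) (snd p) \<Longrightarrow> rho (rho (rho p)) = p"
proof -
  assume "inZ (fst p) (snd p)"
  then have "fst p \<noteq> 0" "snd p \<noteq> 0" unfolding inZ_def using nz' by auto
  then show ?thesis unfolding rho_def by (cases p) (simp add: field_simps)
qed

lemma ZN_mod3: "card ZN mod 3 \<noteq> 1"
proof -
  define Fx where "Fx = {p \<in> ZN. rho p = p}"
  define Y3 where "Y3 = {y. y^3 = 1 \<and> inZ y (inverse y)}"
  have FxY: "Fx = (\<lambda>y. (y, inverse y)) ` Y3"
  proof
    show "Fx \<subseteq> (\<lambda>y. (y, inverse y)) ` Y3"
    proof
      fix p assume "p \<in> Fx"
      then have p: "inZ (fst p) (snd p)" "rho p = p" unfolding Fx_def ZN_def by auto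
      then have y0: "fst p \<noteq> 0" unfolding inZ_def using nz' by auto
      have e1: "snd p = inverse (fst p)" "snd p * inverse (fst p) = fst p"
        using p(2) unfolding rho_def by (metis fst_conv snd_conv prod.collapse)+
      then have "(fst p)^3 = 1" using y0 by (simp add: field_simps power3_eq_cube)
      moreover have "p = (fst p, inverse (fst p))" using e1 by (simp add: prod_eq_iff)
      ultimately show "p \<in> (\<lambda>y. (y, inverse y)) ` Y3" using p e1 unfolding Y3_def
        by (intro image_eqI[of p _ "fst p"]) auto
    qed
    show "(\<lambda>y. (y, inverse y)) ` Y3 \<subseteq> Fx"
    proof
      fix p assume "p \<in> (\<lambda>y. (y, inverse y)) ` Y3"
      then obtain y where y: "p = (y, inverse y)" "y^3 = 1" "inZ y (inverse y)" unfolding Y3_def by auto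
      then have "y \<noteq> 0" by auto
      then have "inverse y * inverse y = y" using y(2) by (simp add: field_simps power3_eq_cube)
      then have "rho p = p" unfolding rho_def y(1) by simp
      then show "p \<in> Fx" unfolding Fx_def ZN_def using y by auto
    qed
  qed
  have cF: "card Fx = card Y3" unfolding FxY by (rule card_image) (auto simp: inj_on_def)
  have eY: "even (card Y3)"
  proof (rule inv2_even[where f=inverse])
    fix y assume "y \<in> Y3"
    then have y: "y^3 = 1" "inZ y (inverse y)" unfolding Y3_def by auto
    then have y0: "y \<noteq> 0" "y \<noteq> 1" "y \<noteq> inverse y" unfolding inZ_def by auto
    have "inZ (inverse y) y" using swapZ[OF y(2)] .
    moreover have "(inverse y)^3 = 1" using y by (simp add: power_inverse)
    ultimately show "inverse y \<in> Y3 \<and> inverse (inverse y) = y \<and> inverse y \<noteq> y" unfolding Y3_def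
      using y0 by auto
  qed simp
  have "card Y3 \<le> card ({y::'a. y^3 = 1} - {1})"
    by (rule card_mono) (auto simp: Y3_def inZ_def)
  also have "\<dots> \<le> 2" using roots_unity_card[of 3, where 'a='a] by (simp add: card_Diff_singleton_if)
  finally have cY: "card Y3 = 0 \<or> card Y3 = 2" using eY by presburger
  have d3: "3 dvd card (ZN - Fx)"
  proof (rule inv3_dvd[where f=rho])
    fix p assume p: "p \<in> ZN - Fx"
    then have pz: "inZ (fst p) (snd p)" "rho p \<noteq> p" unfolding ZN_def Fx_def by auto
    have rz: "inZ (fst (rho p)) (snd (rho p))" using rhoZ[OF pz(1)] unfolding rho_def by simp
    have "rho (rho p) \<noteq> rho p"
    proof
      assume "rho (rho p) = rho p"
      then have "rho (rho (rho p)) = rho (rho p)" by simp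
      then show False using rho3[OF pz(1)] pz(2) \<open>rho (rho p) = rho p\<close> by simp
    qed
    then show "rho p \<in> ZN - Fx \<and> rho (rho (rho p)) = p \<and> rho p \<noteq> p"
      using rz rho3[OF pz(1)] pz(2) unfolding ZN_def Fx_def by auto
  qed simp
  have FZ: "Fx \<subseteq> ZN" unfolding Fx_def by auto
  have "card ZN = card Fx + card (ZN - Fx)"
    using card_Diff_subset[of Fx ZN] card_mono[of ZN Fx] FZ by simp
  then show ?thesis using cF cY d3 by presburger
qed

definition Yp where "Yp = {y. inZ y (inverse y)}"

lemma ZN_split: "\<exists>m. card ZN = card Yp + 4 * m"
proof -
  define Fx where "Fx = {p \<in> ZN. snd p = inverse (fst p)}"
  have FxY: "Fx = (\<lambda>y. (y, inverse y)) ` Yp"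
    unfolding Fx_def Yp_def ZN_def by (auto simp: image_def prod_eq_iff)
  have cF: "card Fx = card Yp" unfolding FxY by (rule card_image) (auto simp: inj_on_def)
  define f :: "'a \<times> 'a \<Rightarrow> 'a \<times> 'a" where "f p = (snd p, fst p)" for p
  define g :: "'a \<times> 'a \<Rightarrow> 'a \<times> 'a" where "g p = (inverse (fst p), inverse (snd p))" for p
  have d4: "4 dvd card (ZN - Fx)"
  proof (rule klein4_dvd[where f=f and g=g])
    fix p assume p: "p \<in> ZN - Fx"
    obtain y z where pe: "p = (y, z)" by (cases p) auto
    have h: "inZ y z" "z \<noteq> inverse y" using p unfolding pe ZN_def Fx_def by auto
    then have y: "y \<in> B" "y \<noteq> 0" "y \<noteq> 1" and z: "z \<in> B" "z \<noteq> 0" "z \<noteq> 1" and yz: "y \<noteq> z"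
      unfolding inZ_def using nz' by auto
    have fz: "inZ z y" using swapZ[OF h(1)] .
    have gz: "inZ (inverse y) (inverse z)" using tauZ[OF h(1)] .
    have n1: "y \<noteq> inverse z" using h(2) y z by (auto simp: field_simps)
    have n2: "inverse z \<noteq> inverse (inverse y)" using h(2) by auto
    have n3: "(inverse y, inverse z) \<noteq> (y, z)"
    proof
      assume "(inverse y, inverse z) = (y, z)"
      then have "y * y = 1" "z * z = 1" using y z by (auto simp: field_simps)
      then have "(y - 1) * (y + 1) = 0" "(z - 1) * (z + 1) = 0" by (simp_all add: algebra_simps)
      then have "y = -1" "z = -1" using y z by (auto simp: add_eq_0_iff2)
      then show False using yz by simp
    qed
    have n4: "(inverse z, inverse y) \<noteq> (y, z)" using h(2) by auto
    show "f p \<in> ZN - Fx \<and> g p \<in> ZN - Fx \<and> f (f p) = p \<and> g (g p) = p \<and> f (g p) = g (f p) \<and>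
          f p \<noteq> p \<and> g p \<noteq> p \<and> f (g p) \<noteq> p"
      unfolding pe f_def g_def ZN_def Fx_def using fz gz n1 n2 n3 n4 yz by auto
  qed simp
  have FZ: "Fx \<subseteq> ZN" unfolding Fx_def by auto
  have "card ZN = card Fx + card (ZN - Fx)"
    using card_Diff_subset[of Fx ZN] card_mono[of ZN Fx] FZ by simp
  then show ?thesis using cF d4 by auto
qed

lemma Yp_even: "even (card Yp)"
proof (rule inv2_even[where f=inverse])
  fix y assume "y \<in> Yp"
  then have y: "inZ y (inverse y)" unfolding Yp_def by auto
  then have y0: "y \<noteq> inverse y" unfolding inZ_def by auto
  have "inZ (inverse y) y" using swapZ[OF y] .
  then show "inverse y \<in> Yp \<and> inverse (inverse y) = y \<and> inverse y \<noteq> y" unfolding Yp_def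
    using y0 by auto
qed simp

lemma ZN_even: "even (card ZN)"
  using ZN_split Yp_even by auto

lemma ZN_4:
  assumes mB: "-1 \<in> B" and nsq: "\<And>y. y \<in> B \<Longrightarrow> y^2 \<noteq> -1"
  shows "4 dvd card ZN"
proof -
  have "4 dvd card Yp"
  proof (rule klein4_dvd[where f=uminus and g=inverse])
    fix y assume "y \<in> Yp"
    then have h: "inZ y (inverse y)" unfolding Yp_def by auto
    then have y: "y \<in> B" "y \<noteq> 0" "y \<noteq> 1" "y \<noteq> inverse y" unfolding inZ_def using nz' by auto
    have ym: "y \<noteq> -1" using y(4) by auto
    have ysq: "y * y \<noteq> 1"
    proof
      assume "y * y = 1"
      then have "(y - 1) * (y + 1) = 0" by (simp add: algebra_simps)
      then show False using y ym by (auto simp: add_eq_0_iff2 minus_equation_iff)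
    qed
    have iy: "inZ (inverse y) y" using swapZ[OF h] .
    have mz: "inZ (-y) (inverse (-y))"
    proof -
      have "-y \<in> B" using mul[OF mB y(1)] by simp
      moreover have "inverse (-y) \<in> B" using inv[OF \<open>-y \<in> B\<close>] .
      moreover have "-y \<noteq> 1" using ym by (auto simp: minus_equation_iff)
      moreover have "inverse (-y) \<noteq> 1" using ym y(2) by (auto simp: inverse_minus_eq field_simps)
      moreover have "-y \<noteq> inverse (-y)" using y(4) by (auto simp: inverse_minus_eq)
      moreover have "del 1 (-y) (inverse (-y)) = ((1+y)/(1-y))^2 * del 1 y (inverse y)"
      proof -
        have a: "1 - y \<noteq> 0" "1 + y \<noteq> 0" "y - 1 \<noteq> 0" "y + 1 \<noteq> 0" using y ym by (auto simp: add_eq_0_iff2 minus_equation_iff)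
        have e: "(1-y)^2 * del 1 (-y) (inverse (-y)) = (1+y)^2 * del 1 y (inverse y)"
          unfolding del_def using y(2) by (simp add: field_simps power2_eq_square)
        have "del 1 (-y) (inverse (-y)) = ((1+y)^2 * del 1 y (inverse y)) / (1-y)^2"
          using a(1) by (simp add: e[symmetric])
        then show ?thesis by (simp add: power_divide)
      qed
      moreover have "(1+y)/(1-y) \<noteq> 0" using y ym by (auto simp: add_eq_0_iff2 minus_equation_iff)
      ultimately show ?thesis using h sqr_mult_sq[of "(1+y)/(1-y)"] unfolding inZ_def by simp
    qed
    have n1: "- y \<noteq> y" using y(2) two by (metis add_eq_0_iff2 mult_2 mult_eq_0_iff neg_equal_iff_equal)
    have n2: "- inverse y \<noteq> y"
    proof
      assume "- inverse y = y"
      then have "y^2 = -1" using y(2) by (auto simp: field_simps power2_eq_square)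
      then show False using nsq[OF y(1)] by simp
    qed
    show "- y \<in> Yp \<and> inverse y \<in> Yp \<and> - (- y) = y \<and> inverse (inverse y) = y \<and>
          - inverse y = inverse (- y) \<and> - y \<noteq> y \<and> inverse y \<noteq> y \<and> - inverse y \<noteq> y"
      unfolding Yp_def using mz iy y(4) n1 n2 by (auto simp: inverse_minus_eq)
  qed simp
  then show ?thesis using ZN_split by auto
qed

definition Zc where "Zc c = {p. fst p \<in> B \<and> snd p \<in> B \<and> fst p \<noteq> 1 \<and> snd p \<noteq> 1 \<and> fst p \<noteq> snd p
   \<and> sqr (del 1 (fst p) (snd p)) = c}"

definition Wc where "Wc c = {t. fst t \<in> B \<and> fst (snd t) \<in> B \<and> snd (snd t) \<in> B \<and>
   fst t \<noteq> fst (snd t) \<and> fst (snd t) \<noteq> snd (snd t) \<and> fst t \<noteq> snd (snd t)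
   \<and> sqr (del (fst t) (fst (snd t)) (snd (snd t))) = c}"

lemma ZN_Zc: "ZN = Zc False"
  unfolding ZN_def Zc_def inZ_def by auto

lemma W_card: "card (Wc c) = card B * card (Zc c)"
proof -
  define f :: "'a \<times> 'a \<times> 'a \<Rightarrow> 'a \<times> 'a \<times> 'a" where "f u = (fst u, fst u * fst (snd u), fst u * snd (snd u))" for u
  have dl: "del x (x*y) (x*z) = x^2 * (x * del 1 y z)" for x y z :: 'a
    unfolding del_def by (simp add: algebra_simps power2_eq_square)
  have cl: "x \<in> B \<Longrightarrow> sqr (del x (x*y) (x*z)) = sqr (del 1 y z)" for x y z
    unfolding dl using sqr_mult_sq[of x] sqr_mult_sqr[OF sq, of x] nz' by simp
  have inj: "inj_on f (B \<times> Zc c)"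
    unfolding inj_on_def f_def using nz' by (auto simp: prod_eq_iff)
  have im: "f ` (B \<times> Zc c) = Wc c"
  proof
    show "f ` (B \<times> Zc c) \<subseteq> Wc c"
    proof
      fix t assume "t \<in> f ` (B \<times> Zc c)"
      then obtain u where u: "u \<in> B \<times> Zc c" "t = f u" by auto
      obtain x y z where ue: "u = (x,(y,z))" by (cases u) auto
      have t: "t = (x, x*y, x*z)" "x \<in> B" "(y,z) \<in> Zc c" using u unfolding ue f_def by auto
      then show "t \<in> Wc c" using mul nz' cl[of x y z] unfolding Wc_def Zc_def by auto
    qed
    show "Wc c \<subseteq> f ` (B \<times> Zc c)"
    proof
      fix t assume t: "t \<in> Wc c"
      obtain x y z where te: "t = (x, y, z)" by (cases t) auto
      have x: "x \<in> B" "x \<noteq> 0" using t nz' unfolding te Wc_def by auto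
      have yz: "y / x \<in> B" "z / x \<in> B" using t mul inv x unfolding te Wc_def by (auto simp: divide_inverse)
      have e: "t = f (x, (y/x, z/x))" unfolding te f_def using x by simp
      have "del x (x*(y/x)) (x*(z/x)) = del x y z" using x by simp
      then have "(y/x, z/x) \<in> Zc c" using t yz x cl[of x "y/x" "z/x"] unfolding te Wc_def Zc_def
        by (auto simp: field_simps)
      then show "t \<in> f ` (B \<times> Zc c)" using e x by blast
    qed
  qed
  have "card (Wc c) = card (B \<times> Zc c)" using card_image[OF inj] im by simp
  then show ?thesis by (simp add: card_cartesian_product)
qed

lemma Z_sum: "card (Zc True) + card (Zc False) = (card B - 1) * (card B - 2)"
proof -
  define B' where "B' = B - {1}"
  have cB': "card B' = card B - 1" unfolding B'_def using one by simp
  have un: "Zc True \<union> Zc False = B' \<times> B' - (\<lambda>y. (y,y)) ` B'"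
    unfolding Zc_def B'_def by auto
  have "card (Zc True \<union> Zc False) = card (Zc True) + card (Zc False)"
    by (rule card_Un_disjoint) (auto simp: Zc_def)
  moreover have "card (B' \<times> B' - (\<lambda>y. (y,y)) ` B') = card B' * card B' - card B'"
  proof -
    have "card ((\<lambda>y. (y,y)) ` B') = card B'" by (rule card_image) (auto simp: inj_on_def)
    moreover have "(\<lambda>y. (y,y)) ` B' \<subseteq> B' \<times> B'" by auto
    ultimately show ?thesis by (simp add: card_Diff_subset card_cartesian_product)
  qed
  ultimately have "card (Zc True) + card (Zc False) = card B' * card B' - card B'" using un by simp
  also have "\<dots> = card B' * (card B' - 1)" by (simp add: diff_mult_distrib2)
  finally have "card (Zc True) + card (Zc False) = card B' * (card B' - 1)" .
  moreover have "card B' - 1 = card B - 2" using cB' by linarith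
  ultimately show ?thesis using cB' by metis
qed

end

lemma final_arith:
  fixes k Z :: nat
  assumes "k > 0" "2*Z = (k-1)*(k-2)" "even Z" "Z mod 3 \<noteq> 1" "k mod 4 = 2 \<Longrightarrow> 4 dvd Z"
  shows "k mod 24 \<in> {1,2,5,10,13,17}"
proof -
  have i: "2 * int Z = (int k - 1) * (int k - 2)"
  proof (cases "k = 1")
    case True then show ?thesis using assms(2) by simp
  next
    case False
    then have "k \<ge> 2" using assms(1) by simp
    then have "int ((k-1)*(k-2)) = (int k - 1) * (int k - 2)" by (simp add: of_nat_diff)
    then show ?thesis using assms(2) by (metis of_nat_mult of_nat_numeral)
  qed
  define r where "r = k mod 24"
  define a where "a = k div 24"
  have ka: "k = 24 * a + r" unfolding r_def a_def by simp
  have r24: "r < 24" unfolding r_def by simp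
  define w :: int where "w = 24 * int a * int a + int a * (2 * int r - 3)"
  have key: "2 * int Z = 24 * w + (int r - 1) * (int r - 2)"
    unfolding i w_def ka by (simp add: algebra_simps)
  have k4: "k mod 4 = r mod 4" unfolding ka by presburger
  have rs: "r = 0 \<or> r = 1 \<or> r = 2 \<or> r = 3 \<or> r = 4 \<or> r = 5 \<or> r = 6 \<or> r = 7 \<or> r = 8 \<or> r = 9 \<or> r = 10 \<or> r = 11 \<or>
     r = 12 \<or> r = 13 \<or> r = 14 \<or> r = 15 \<or> r = 16 \<or> r = 17 \<or> r = 18 \<or> r = 19 \<or> r = 20 \<or> r = 21 \<or> r = 22 \<or> r = 23"
    using r24 by presburger
  have ev: "even (int Z)" using assms(3) by simp
  have m3: "int Z mod 3 \<noteq> 1" using assms(4) by (metis of_nat_mod of_nat_1 of_nat_eq_iff of_nat_numeral)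
  have m4: "r mod 4 = 2 \<Longrightarrow> 4 dvd int Z" using assms(5) k4 by (metis int_dvd_int_iff of_nat_numeral)
  define c :: int where "c = (int r - 1) * (int r - 2)"
  have ce: "even c" unfolding c_def by auto
  define d where "d = c div 2"
  have cd: "c = 2 * d" unfolding d_def using ce by simp
  have zd: "int Z = 12 * w + d" using key cd unfolding c_def by linarith
  have a1: "\<And>z w d::int. z = 12*w + d \<Longrightarrow> z mod 2 = d mod 2" by presburger
  have a2: "\<And>z w d::int. z = 12*w + d \<Longrightarrow> z mod 3 = d mod 3" by presburger
  have a3: "\<And>z w d::int. z = 12*w + d \<Longrightarrow> 4 dvd z \<longleftrightarrow> 4 dvd d" by presburger
  have e1: "d mod 2 = 0" using ev a1[OF zd] by presburger
  have e2: "d mod 3 \<noteq> 1" using m3 a2[OF zd] by presburger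
  have e3: "r mod 4 = 2 \<Longrightarrow> 4 dvd d" using m4 a3[OF zd] by blast
  show ?thesis unfolding r_def[symmetric]
    using rs e1 e2 e3 unfolding d_def c_def by (elim disjE; simp)
qed

lemma card3_iff: "card {a, b, c} = 3 \<longleftrightarrow> a \<noteq> b \<and> b \<noteq> c \<and> a \<noteq> c"
  by (auto simp: card_insert_if)

lemma DD_Some: "DD (Some x) (Some y) (Some z) = del x y z"
  by (simp add: DD_def dt_def del_def)

context grp begin

lemma link: "{t. card (s3 t) = 3 \<and> sqr (DD (fst t) (fst (snd t)) (snd (snd t))) = c \<and> s3 t \<subseteq> Some ` B}
   = m3 Some ` Wc c"
proof
  show "{t. card (s3 t) = 3 \<and> sqr (DD (fst t) (fst (snd t)) (snd (snd t))) = c \<and> s3 t \<subseteq> Some ` B} \<subseteq> m3 Some ` Wc c"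
  proof
    fix t assume t: "t \<in> {t. card (s3 t) = 3 \<and> sqr (DD (fst t) (fst (snd t)) (snd (snd t))) = c \<and> s3 t \<subseteq> Some ` B}"
    obtain P Q R where te: "t = (P, Q, R)" by (cases t) auto
    have "P \<in> Some ` B" "Q \<in> Some ` B" "R \<in> Some ` B" using t unfolding te s3_def by auto
    then obtain x y z where xyz: "P = Some x" "Q = Some y" "R = Some z" "x \<in> B" "y \<in> B" "z \<in> B" by blast
    have "(x, y, z) \<in> Wc c" using t xyz(4-6) unfolding te xyz Wc_def s3_def by (simp add: card3_iff DD_Some)
    moreover have "t = m3 Some (x, y, z)" unfolding te xyz m3_def by simp
    ultimately show "t \<in> m3 Some ` Wc c" by blast
  qed
  show "m3 Some ` Wc c \<subseteq> {t. card (s3 t) = 3 \<and> sqr (DD (fst t) (fst (snd t)) (snd (snd t))) = c \<and> s3 t \<subseteq> Some ` B}"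
    unfolding Wc_def m3_def s3_def by (auto simp: card3_iff DD_Some)
qed

lemma link_card: "card {t. card (s3 t) = 3 \<and> sqr (DD (fst t) (fst (snd t)) (snd (snd t))) = c \<and> s3 t \<subseteq> Some ` B}
   = card (Wc c)"
proof -
  have "inj (m3 (Some :: 'a \<Rightarrow> 'a option))" unfolding inj_def m3_def by (auto simp: prod_eq_iff)
  then show ?thesis unfolding link by (metis card_image inj_on_subset subset_UNIV)
qed

end

theorem theorem3p1:
  fixes q k :: nat
  assumes "card (UNIV :: 'a::{field,finite} set) = q"
    and "\<exists>p n. prime p \<and> odd p \<and> n > 0 \<and> q = p ^ n"
    and "q mod 4 = 1"
    and "k dvd q - 1"
    and "even ((q - 1) div k)"
    and "gives_3design TYPE('a) k"
  shows "k mod 24 \<in> {1, 2, 5, 10, 13, 17}"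
proof -
  have oq: "odd (card (UNIV :: 'a set))" using assms(1,2) by auto
  have q1: "q > 1" using card_gt1[where 'a='a] assms(1) by simp
  have k0: "k > 0" using assms(4) q1 by (cases "k = 0") auto
  define B where "B = (mult_subgroup k :: 'a set)"
  have cB: "card B = k" unfolding B_def using msub_card[of k, where 'a='a] assms(1,4) k0 by simp
  obtain e where e: "q - 1 = k * e" using assms(4) by auto
  have ee: "even e" using assms(5) e k0 by simp
  define h where "h = (q - 1) div 2"
  have hke: "h = k * (e div 2)" unfolding h_def e using ee by auto
  have heven: "even h"
  proof -
    define m where "m = q div 4"
    have "q = 4 * m + 1" using div_mult_mod_eq[of q 4] assms(3) unfolding m_def by linarith
    then have "q - 1 = 2 * (2 * m)" by simp
    then show ?thesis unfolding h_def by simp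
  qed
  have two: "(2::'a) \<noteq> 0" using two_nz[OF oq] .
  have sqB: "sqr x" if "x \<in> B" for x
  proof -
    have x: "x \<noteq> 0" "x^k = 1" using that unfolding B_def mult_subgroup_def by auto
    have "x ^ h = 1" unfolding hke power_mult x(2) by simp
    then show ?thesis using sqr_card(2)[OF oq x(1)] assms(1) unfolding h_def by simp
  qed
  have m1: "sqr (-1::'a)"
  proof -
    have "(-1::'a) ^ h = 1" using heven by simp
    then show ?thesis using sqr_card(2)[OF oq, of "-1"] assms(1) unfolding h_def by simp
  qed
  interpret grp B
  proof
    show "1 \<in> B" unfolding B_def mult_subgroup_def by simp
    show "x * y \<in> B" if "x \<in> B" "y \<in> B" for x y
      using that unfolding B_def mult_subgroup_def by (simp add: power_mult_distrib)
    show "inverse x \<in> B" if "x \<in> B" for x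
      using that unfolding B_def mult_subgroup_def by (simp add: power_inverse)
    show "0 \<notin> B" unfolding B_def mult_subgroup_def by simp
  qed (use sqB m1 two in auto)
  have bal: "card {t. goodp t \<and> s3 t \<subseteq> Some ` B} = card {t. badp t \<and> s3 t \<subseteq> Some ` B}"
    using good_bad_balance[OF _ oq] assms(6) unfolding gives_3design_def B_def by blast
  have "{t. goodp t \<and> s3 t \<subseteq> Some ` B} = {t. card (s3 t) = 3 \<and> sqr (DD (fst t) (fst (snd t)) (snd (snd t))) = True \<and> s3 t \<subseteq> Some ` B}"
    unfolding goodp_def by auto
  moreover have "{t. badp t \<and> s3 t \<subseteq> Some ` B} = {t. card (s3 t) = 3 \<and> sqr (DD (fst t) (fst (snd t)) (snd (snd t))) = False \<and> s3 t \<subseteq> Some ` B}"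
    unfolding badp_def by auto
  ultimately have "card (Wc True) = card (Wc False)" using bal link_card[of True] link_card[of False] by simp
  then have "k * card (Zc True) = k * card (Zc False)" using W_card[of True] W_card[of False] cB by simp
  then have zz: "card (Zc True) = card (Zc False)" using k0 by simp
  define Z where "Z = card ZN"
  have Z2: "2 * Z = (k-1)*(k-2)" using Z_sum zz cB unfolding Z_def ZN_Zc by simp
  have Zev: "even Z" using ZN_even unfolding Z_def .
  have Z3: "Z mod 3 \<noteq> 1" using ZN_mod3 unfolding Z_def .
  have Z4: "4 dvd Z" if k4: "k mod 4 = 2"
  proof -
    define m where "m = k div 4"
    have "k = 4 * m + 2" using div_mult_mod_eq[of k 4] k4 unfolding m_def by linarith
    then have k42: "k = 2 * (2 * m + 1)" by simp
    have kev: "even k" by (subst k42) simp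
    have mB: "-1 \<in> B" unfolding B_def mult_subgroup_def using kev by simp
    have hk: "odd (k div 2)" by (subst k42) simp
    have "y^2 \<noteq> -1" if "y \<in> B" for y
    proof
      assume "y^2 = -1"
      have "y^k = (y^2)^(k div 2)" using kev by (simp flip: power_mult)
      then have "y^k = (-1)^(k div 2)" using \<open>y^2 = -1\<close> by simp
      also have "\<dots> = -1" using hk by simp
      finally have yk: "y^k = -1" .
      have "y^k = 1" using that unfolding B_def mult_subgroup_def by simp
      then have mm: "(-1::'a) = 1" using yk by simp
      have "(2::'a) = 1 - (-1)" by simp
      also have "\<dots> = 0" using mm by simp
      finally have "(2::'a) = 0" .
      then show False using two by simp
    qed
    then show ?thesis using ZN_4[OF mB] unfolding Z_def by blast
  qed
  show ?thesis using final_arith[OF k0 Z2 Zev Z3 Z4] .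
qed

end
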